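(* Let $\Omega\subset\mathbb{R}^n$ be a bounded open convex set with smooth boundary and let $u$ be a viscosity solution of $(N_\Lambda)$ with $\Lambda=\Lambda_\infty(\Omega)=\frac{2}{\operatorname{diam}(\Omega)}$. Then there is no nonempty open set $\Omega'$ with $\overline{\Omega'}\subset\Omega$ such that $u=0$ on $\partial\Omega'$ and either $u>0$ in $\Omega'$ or $u<0$ in $\Omega'$.
   Context: $\operatorname{diam}(\Omega)=\sup_{x,y\in\Omega}|x-y|$. $\nu$ denotes the outer unit normal to $\partial\Omega$, and $\Delta_\infty u=\sum_{i,j=1}^n u_{x_i}u_{x_ix_j}u_{x_j}$. For $\Lambda\ge 0$, problem $(N_\Lambda)$ is $$\min\{|\nabla u|-\Lambda|u|,-\Delta_\infty u\}=0 \text{ in }\{u>0\}\cap\Omega,\quad \max\{\Lambda|u|-|\nabla u|,-\Delta_\infty u\}=0 \text{ in }\{u<0\}\cap\Omega,\quad -\Delta_\infty u=0 \text{ in }\{u=0\}\cap\Omega,\quad \tfrac{\partial u}{\partial\nu}=0 \text{ on }\partial\Omega,$$ understood in the viscosity sense as follows. For $s\in\mathbb{R}$, $\xi\in\mathbb{R}^n$, $X$ a symmetric $n\times n$ matrix, let $F(s,\xi,X)=\min\{|\xi|-\Lambda|s|,-\langle X\xi,\xi\rangle\}$, $G(s,\xi,X)=\max\{\Lambda|s|-|\xi|,-\langle X\xi,\xi\rangle\}$, $H(X)=-\langle X\xi,\xi\rangle$ (evaluated at the same $\xi$). For a function $u$ and point $x_0$, let $E$ denote $F$ if $u(x_0)>0$,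 $G$ if $u(x_0)<0$, $H$ if $u(x_0)=0$. An upper semicontinuous $u$ on $\overline\Omega$ is a viscosity subsolution if: for every $x_0\in\Omega$ and $\phi\in C^2(\Omega)$ with $\phi(x_0)=u(x_0)$ and $u(x)<\phi(x)$ for $x\neq x_0$, one has $E(\phi(x_0),\nabla\phi(x_0),\nabla^2\phi(x_0))\le 0$; and for every $x_0\in\partial\Omega$ and $\phi\in C^2(\overline\Omega)$ with the same touching property, $\min\{E(\phi(x_0),\nabla\phi(x_0),\nabla^2\phi(x_0)),\frac{\partial\phi}{\partial\nu}(x_0)\}\le 0$. A lower semicontinuous $u$ is a viscosity supersolution if the same holds with $u(x)>\phi(x)$ for $x\ne x_0$, with "$E\le 0$" replaced by "$E\ge 0$" at interior points and with $\max\{E(\phi(x_0),\nabla\phi(x_0),\nabla^2\phi(x_0)),\frac{\partial\phi}{\partial\nu}(x_0)\}\ge 0$ at boundary points. A continuous $u$ is a viscosity solution if it is both a sub- and a supersolution. *)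

theory Defs
  imports "HOL-Analysis.Analysis"
begin

fun Ck_on :: "nat \<Rightarrow> ('a::euclidean_space \<Rightarrow> real) \<Rightarrow> 'a set \<Rightarrow> bool" where
  "Ck_on 0 f S = continuous_on S f"
| "Ck_on (Suc k) f S =
     ((\<forall>x\<in>S. f differentiable (at x)) \<and> (\<forall>v. Ck_on k (\<lambda>x. frechet_derivative f (at x) v) S))"

definition smooth_on :: "('a::euclidean_space \<Rightarrow> real) \<Rightarrow> 'a set \<Rightarrow> bool" where
  "smooth_on f S = (\<forall>k. Ck_on k f S)"

definition grad :: "('a::euclidean_space \<Rightarrow> real) \<Rightarrow> 'a \<Rightarrow> 'a" where
  "grad \<phi> x = (\<Sum>b\<in>Basis. frechet_derivative \<phi> (at x) b *\<^sub>R b)"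

definition hess_form :: "('a::euclidean_space \<Rightarrow> real) \<Rightarrow> 'a \<Rightarrow> 'a \<Rightarrow> real" where
  "hess_form \<phi> x \<xi> = frechet_derivative (\<lambda>y. frechet_derivative \<phi> (at y) \<xi>) (at x) \<xi>"

definition local_defining_fun :: "'a::euclidean_space set \<Rightarrow> 'a \<Rightarrow> 'a set \<Rightarrow> ('a \<Rightarrow> real) \<Rightarrow> bool" where
  "local_defining_fun \<Omega> x U \<rho> =
     (open U \<and> x \<in> U \<and> smooth_on \<rho> U \<and> (\<forall>y\<in>U. grad \<rho> y \<noteq> 0) \<and>
      \<Omega> \<inter> U = {y\<in>U. \<rho> y < 0})"

definition smooth_boundary :: "'a::euclidean_space set \<Rightarrow> bool" where
  "smooth_boundary \<Omega> = (\<forall>x\<in>frontier \<Omega>. \<exists>U \<rho>. local_defining_fun \<Omega> x U \<rho>)"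

definition outer_normal :: "'a::euclidean_space set \<Rightarrow> 'a \<Rightarrow> 'a" where
  "outer_normal \<Omega> x =
     (SOME \<nu>. \<exists>U \<rho>. local_defining_fun \<Omega> x U \<rho> \<and> \<nu> = (1 / norm (grad \<rho> x)) *\<^sub>R grad \<rho> x)"

text \<open>The operator E(s, xi, q) where q = <X xi, xi>: F if s>0, G if s<0, H if s=0.\<close>
definition E_op :: "real \<Rightarrow> real \<Rightarrow> 'a::euclidean_space \<Rightarrow> real \<Rightarrow> real" where
  "E_op \<Lambda> s \<xi> q =
     (if s > 0 then min (norm \<xi> - \<Lambda> * \<bar>s\<bar>) (- q)
      else if s < 0 then max (\<Lambda> * \<bar>s\<bar> - norm \<xi>) (- q)
      else - q)"

definition visc_subsolution :: "real \<Rightarrow> 'a::euclidean_space set \<Rightarrow> ('a \<Rightarrow> real) \<Rightarrow> bool" where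
  "visc_subsolution \<Lambda> \<Omega> u =
    ((\<forall>x0\<in>\<Omega>. \<forall>\<phi>. Ck_on 2 \<phi> \<Omega> \<and> \<phi> x0 = u x0 \<and> (\<forall>x\<in>\<Omega>. x \<noteq> x0 \<longrightarrow> u x < \<phi> x)
        \<longrightarrow> E_op \<Lambda> (\<phi> x0) (grad \<phi> x0) (hess_form \<phi> x0 (grad \<phi> x0)) \<le> 0) \<and>
     (\<forall>x0\<in>frontier \<Omega>. \<forall>\<phi>. (\<exists>V. open V \<and> closure \<Omega> \<subseteq> V \<and> Ck_on 2 \<phi> V) \<and> \<phi> x0 = u x0 \<and>
        (\<forall>x\<in>closure \<Omega>. x \<noteq> x0 \<longrightarrow> u x < \<phi> x)
        \<longrightarrow> min (E_op \<Lambda> (\<phi> x0) (grad \<phi> x0) (hess_form \<phi> x0 (grad \<phi> x0)))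
                (grad \<phi> x0 \<bullet> outer_normal \<Omega> x0) \<le> 0))"

definition visc_supersolution :: "real \<Rightarrow> 'a::euclidean_space set \<Rightarrow> ('a \<Rightarrow> real) \<Rightarrow> bool" where
  "visc_supersolution \<Lambda> \<Omega> u =
    ((\<forall>x0\<in>\<Omega>. \<forall>\<phi>. Ck_on 2 \<phi> \<Omega> \<and> \<phi> x0 = u x0 \<and> (\<forall>x\<in>\<Omega>. x \<noteq> x0 \<longrightarrow> u x > \<phi> x)
        \<longrightarrow> E_op \<Lambda> (\<phi> x0) (grad \<phi> x0) (hess_form \<phi> x0 (grad \<phi> x0)) \<ge> 0) \<and>
     (\<forall>x0\<in>frontier \<Omega>. \<forall>\<phi>. (\<exists>V. open V \<and> closure \<Omega> \<subseteq> V \<and> Ck_on 2 \<phi> V) \<and> \<phi> x0 = u x0 \<and>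
        (\<forall>x\<in>closure \<Omega>. x \<noteq> x0 \<longrightarrow> u x > \<phi> x)
        \<longrightarrow> max (E_op \<Lambda> (\<phi> x0) (grad \<phi> x0) (hess_form \<phi> x0 (grad \<phi> x0)))
                (grad \<phi> x0 \<bullet> outer_normal \<Omega> x0) \<ge> 0))"

definition visc_solution :: "real \<Rightarrow> 'a::euclidean_space set \<Rightarrow> ('a \<Rightarrow> real) \<Rightarrow> bool" where
  "visc_solution \<Lambda> \<Omega> u =
     (continuous_on (closure \<Omega>) u \<and> visc_subsolution \<Lambda> \<Omega> u \<and> visc_supersolution \<Lambda> \<Omega> u)"

end

theory Submission
  imports Defs
begin

definition P :: "real \<Rightarrow> real \<Rightarrow> real \<Rightarrow> real \<Rightarrow> real \<Rightarrow> real \<Rightarrow> 'a::euclidean_space \<Rightarrow> 'a \<Rightarrow> 'a \<Rightarrow> real" where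
 "P \<sigma> a b m c K e x0 x = \<sigma> * (a*(e\<bullet>x - m) - b*(e\<bullet>x - m)^2 + c + K*((x-x0)\<bullet>(x-x0))^2)"

definition D1 :: "real \<Rightarrow> real \<Rightarrow> real \<Rightarrow> real \<Rightarrow> real \<Rightarrow> 'a::euclidean_space \<Rightarrow> 'a \<Rightarrow> 'a \<Rightarrow> 'a \<Rightarrow> real" where
 "D1 \<sigma> a b m K e x0 x h = \<sigma> * (a*(e\<bullet>h) - 2*b*(e\<bullet>x - m)*(e\<bullet>h) + 4*K*((x-x0)\<bullet>(x-x0))*((x-x0)\<bullet>h))"

definition D2 :: "real \<Rightarrow> real \<Rightarrow> real \<Rightarrow> 'a::euclidean_space \<Rightarrow> 'a \<Rightarrow> 'a \<Rightarrow> 'a \<Rightarrow> 'a \<Rightarrow> real" where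
 "D2 \<sigma> b K e x0 v x w = \<sigma> * (-2*b*(e\<bullet>w)*(e\<bullet>v) + 4*K*(2*((x-x0)\<bullet>w)*((x-x0)\<bullet>v) + ((x-x0)\<bullet>(x-x0))*(w\<bullet>v)))"

lemma P_deriv: "(P \<sigma> a b m c K e x0 has_derivative D1 \<sigma> a b m K e x0 x) (at x)"
  unfolding P_def[abs_def] D1_def[abs_def]
  apply (rule derivative_eq_intros refl | simp)+
  apply (rule ext)
  apply (simp add: algebra_simps inner_commute)
  done

lemma D1_deriv: "((\<lambda>x. D1 \<sigma> a b m K e x0 x v) has_derivative D2 \<sigma> b K e x0 v x) (at x)"
  unfolding D1_def[abs_def] D2_def[abs_def]
  apply (rule derivative_eq_intros refl | simp)+
  apply (rule ext)
  apply (simp add: algebra_simps inner_commute)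
  done

lemma fd_P: "frechet_derivative (P \<sigma> a b m c K e x0) (at x) = D1 \<sigma> a b m K e x0 x"
  using P_deriv frechet_derivative_at by metis

lemma fd_D1: "frechet_derivative (\<lambda>x. D1 \<sigma> a b m K e x0 x v) (at x) = D2 \<sigma> b K e x0 v x"
  using D1_deriv frechet_derivative_at by metis

lemma P_C2: "Ck_on 2 (P \<sigma> a b m c K e x0) S"
proof -
  have "Ck_on (Suc (Suc 0)) (P \<sigma> a b m c K e x0) S"
    unfolding Ck_on.simps fd_P fd_D1
    using P_deriv D1_deriv
    by (auto simp: differentiable_def D2_def intro!: continuous_intros) blast+
  then show ?thesis by (simp add: numeral_2_eq_2)
qed

lemma grad_P: "grad (P \<sigma> a b m c K e x0) x0 = (\<sigma>*(a - 2*b*(e\<bullet>x0 - m))) *\<^sub>R e"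
proof -
  have "grad (P \<sigma> a b m c K e x0) x0 = (\<Sum>bb\<in>Basis. ((\<sigma>*(a - 2*b*(e\<bullet>x0 - m))) * (e\<bullet>bb)) *\<^sub>R bb)"
    unfolding grad_def fd_P D1_def by (intro sum.cong) (auto simp: algebra_simps)
  also have "\<dots> = (\<sigma>*(a - 2*b*(e\<bullet>x0 - m))) *\<^sub>R (\<Sum>bb\<in>Basis. (e\<bullet>bb) *\<^sub>R bb)"
    by (simp add: scaleR_sum_right)
  finally show ?thesis by (simp add: euclidean_representation)
qed

lemma hess_P: "hess_form (P \<sigma> a b m c K e x0) x0 \<xi> = \<sigma> * (-2*b*(e\<bullet>\<xi>)^2)"
  unfolding hess_form_def fd_P fd_D1 D2_def by (simp add: power2_eq_square)


lemma construct:
  fixes \<Omega> \<Omega>' :: "'a::euclidean_space set" and u :: "'a \<Rightarrow> real"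
  assumes bO: "bounded \<Omega>" and cu: "continuous_on (closure \<Omega>) u"
    and oO': "open \<Omega>'" and ne: "\<Omega>' \<noteq> {}" and sub: "closure \<Omega>' \<subseteq> \<Omega>"
    and fr: "\<forall>x\<in>frontier \<Omega>'. u x = 0" and pos: "\<forall>x\<in>\<Omega>'. \<sigma> * u x > 0"
    and sg: "\<sigma> = 1 \<or> \<sigma> = -1" and ne1: "norm e = 1" and L0: "\<Lambda> \<ge> 0"
    and xb: "xb \<in> closure \<Omega>'" and xbmax: "\<forall>x\<in>closure \<Omega>'. \<sigma> * u x \<le> \<sigma> * u xb"
    and mm: "\<forall>x\<in>closure \<Omega>'. m \<le> e \<bullet> x" and Lt: "\<Lambda> * (e \<bullet> xb - m) < 1"
  shows "\<exists>x0 \<psi>. x0 \<in> \<Omega>' \<and> Ck_on 2 \<psi> \<Omega> \<and> \<psi> x0 = u x0 \<and> (\<forall>x\<in>\<Omega>. x \<noteq> x0 \<longrightarrow> \<sigma> * u x < \<sigma> * \<psi> x)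
     \<and> norm (grad \<psi> x0) > \<Lambda> * \<bar>u x0\<bar> \<and> \<sigma> * hess_form \<psi> x0 (grad \<psi> x0) < 0"
proof -
  have ss: "\<sigma> * \<sigma> = 1" "\<bar>\<sigma>\<bar> = 1" using sg by auto
  define w where "w x = \<sigma> * u x" for x
  define M where "M = w xb"
  obtain y where y: "y \<in> \<Omega>'" using ne by blast
  have "y \<in> closure \<Omega>'" using y closure_subset by blast
  hence "w y \<le> M" using xbmax by (simp add: w_def M_def)
  hence Mpos: "M > 0" using pos y w_def by force
  have "\<Omega>' \<subseteq> \<Omega>" using sub closure_subset by blast
  hence bO': "bounded \<Omega>'" using bO bounded_subset by blast
  hence bcl: "bounded (closure \<Omega>')" using bO bounded_subset bounded_closure by blast
  then obtain B where B: "\<forall>x\<in>closure \<Omega>'. norm x \<le> B" using bounded_iff by blast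
  define T where "T = \<bar>B - m\<bar>"
  have T0: "T \<ge> 0" by (simp add: T_def)
  have sT: "e \<bullet> x - m \<le> T" if "x \<in> closure \<Omega>'" for x
  proof -
    have "e \<bullet> x \<le> norm e * norm x" by (rule norm_cauchy_schwarz)
    then show ?thesis using B that ne1 unfolding T_def by auto
  qed
  have zz: "0 \<le> e \<bullet> x - m" if "x \<in> closure \<Omega>'" for x using mm that by auto
  define tb where "tb = e \<bullet> xb - m"
  have tb0: "tb \<ge> 0" using zz xb tb_def by auto
  define \<delta> where "\<delta> = (1 - \<Lambda>*tb)*M / (2*(tb+1))"
  have Ltb: "\<Lambda>*tb < 1" using Lt tb_def by simp
  have dpos: "\<delta> > 0" unfolding \<delta>_def using Ltb Mpos tb0 by (auto intro!: divide_pos_pos)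
  define a where "a = \<Lambda>*M + \<delta>"
  define b where "b = \<delta>/(4*(T+1))"
  have bpos: "b > 0" using dpos T0 by (simp add: b_def)
  have "\<delta> * tb < (1 - \<Lambda>*tb)*M"
  proof -
    have "\<delta> * tb = (1 - \<Lambda>*tb)*M * (tb / (2*(tb+1)))" by (simp add: \<delta>_def)
    also have "\<dots> < (1 - \<Lambda>*tb)*M * 1"
      using Ltb Mpos tb0 by (intro mult_strict_left_mono) (auto simp: field_simps)
    finally show ?thesis by simp
  qed
  hence atb: "a * tb < M" by (simp add: a_def algebra_simps)
  have "2*b*T < \<delta>"
  proof -
    have "2*b*T = \<delta> * (T/(2*(T+1)))" using T0 by (simp add: b_def field_simps)
    also have "\<dots> < \<delta> * 1" using dpos T0 by (intro mult_strict_left_mono) (auto simp: field_simps)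
    finally show ?thesis by simp
  qed
  hence abT: "a - 2*b*T > \<Lambda>*M" by (simp add: a_def)
  have LM0: "\<Lambda>*M \<ge> 0" using L0 Mpos by simp
  define \<phi> where "\<phi> x = a*(e\<bullet>x - m) - b*(e\<bullet>x - m)^2" for x
  have phi0: "\<phi> x \<ge> 0" if "x \<in> closure \<Omega>'" for x
  proof -
    have "b*(e\<bullet>x - m) \<le> b*T" using sT[OF that] bpos by simp
    moreover have "b*T \<le> 2*b*T" using bpos T0 by simp
    ultimately have "a - b*(e\<bullet>x - m) \<ge> 0" using abT LM0 by linarith
    hence "(e\<bullet>x - m) * (a - b*(e\<bullet>x - m)) \<ge> 0" using zz[OF that] by simp
    thus ?thesis by (simp add: \<phi>_def power2_eq_square algebra_simps)
  qed
  have cphi: "continuous_on S \<phi>" for S unfolding \<phi>_def by (intro continuous_intros)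
  have clO: "closure \<Omega>' \<subseteq> closure \<Omega>" using sub closure_subset by blast
  have cw: "continuous_on (closure \<Omega>) w" unfolding w_def using cu by (intro continuous_intros)
  define f where "f x = w x - \<phi> x" for x
  have cf: "continuous_on (closure \<Omega>) f" unfolding f_def using cw cphi by (intro continuous_intros)
  have cpt: "compact (closure \<Omega>')" using bO' compact_closure by blast
  have ne': "closure \<Omega>' \<noteq> {}" using ne by (simp add: closure_eq_empty)
  obtain x0 where x0c: "x0 \<in> closure \<Omega>'" and x0m: "\<forall>z\<in>closure \<Omega>'. f z \<le> f x0"
    using continuous_attains_sup[OF cpt ne' continuous_on_subset[OF cf clO]] by blast
  define c where "c = f x0"
  have "\<phi> xb \<le> a*tb" using bpos by (simp add: \<phi>_def tb_def)
  hence "f xb > 0" using atb by (simp add: f_def M_def)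
  moreover have "f xb \<le> c" using x0m xb c_def by blast
  ultimately have cpos: "c > 0" by linarith
  have x0O: "x0 \<in> \<Omega>'"
  proof (rule ccontr)
    assume "x0 \<notin> \<Omega>'"
    hence "x0 \<in> frontier \<Omega>'" using x0c closure_Un_frontier[of \<Omega>'] by blast
    hence "w x0 = 0" using fr w_def by simp
    hence "c \<le> 0" using phi0[OF x0c] by (simp add: c_def f_def)
    thus False using cpos by simp
  qed
  obtain d0 where d0: "d0 > 0" "ball x0 d0 \<subseteq> \<Omega>'" using oO' x0O open_contains_ball by blast
  have "compact (closure \<Omega>)" using bO by (simp add: compact_closure)
  hence "compact (f ` closure \<Omega>)" using cf compact_continuous_image by blast
  hence "bounded (f ` closure \<Omega>)" by (rule compact_imp_bounded)
  then obtain B2 where B2: "\<forall>x\<in>closure \<Omega>. \<bar>f x\<bar> \<le> B2" unfolding bounded_iff by auto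
  define K where "K = (\<bar>B2\<bar> + 1) / d0^4"
  have Kpos: "K > 0" using d0 by (simp add: K_def)
  define \<psi> where "\<psi> = P \<sigma> a b m c K e x0"
  have psiv: "\<sigma> * \<psi> x = \<phi> x + c + K * norm (x - x0) ^ 4" for x
  proof -
    have "norm(x-x0)^4 = (norm(x-x0)^2)^2" by (simp flip: power_mult)
    hence "((x-x0)\<bullet>(x-x0))^2 = norm (x-x0)^4" by (simp only: power2_norm_eq_inner)
    have "\<sigma> * \<psi> x = (\<sigma> * \<sigma>) * (\<phi> x + c + K*((x-x0)\<bullet>(x-x0))^2)"
      unfolding \<psi>_def P_def \<phi>_def by (simp only: mult.assoc)
    then show ?thesis using \<open>((x-x0)\<bullet>(x-x0))^2 = norm (x-x0)^4\<close> ss(1) by simp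
  qed
  have "\<sigma> * \<psi> x0 = \<sigma> * u x0" using psiv[of x0] by (simp add: c_def f_def w_def)
  hence psi0: "\<psi> x0 = u x0" using ss by auto
  have touch: "\<forall>x\<in>\<Omega>. x \<noteq> x0 \<longrightarrow> \<sigma> * u x < \<sigma> * \<psi> x"
  proof (intro ballI impI)
    fix x assume xO: "x \<in> \<Omega>" and xne: "x \<noteq> x0"
    have Kp: "K * norm (x - x0) ^ 4 > 0" using Kpos xne by simp
    show "\<sigma> * u x < \<sigma> * \<psi> x"
    proof (cases "x \<in> \<Omega>'")
      case True
      hence "f x \<le> c" using x0m closure_subset c_def by blast
      then show ?thesis using Kp psiv[of x] by (simp add: f_def w_def)
    next
      case False
      hence "x \<notin> ball x0 d0" using d0 by blast
      hence "norm (x - x0) \<ge> d0" by (simp add: dist_norm norm_minus_commute)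
      hence "norm (x - x0)^4 \<ge> d0^4" using d0 by (intro power_mono) auto
      hence "K * norm (x - x0)^4 \<ge> K * d0^4" using Kpos by simp
      also have "K * d0^4 = \<bar>B2\<bar> + 1" using d0 by (simp add: K_def)
      finally have "K * norm (x - x0)^4 \<ge> \<bar>B2\<bar> + 1" .
      moreover have "f x \<le> B2" using B2 xO closure_subset by force
      ultimately show ?thesis using psiv[of x] cpos by (simp add: f_def w_def)
    qed
  qed
  define zz where "zz = e \<bullet> x0 - m"
  have s0T: "zz \<le> T" using sT x0c zz_def by simp
  have "2*b*zz \<le> 2*b*T" using bpos s0T by simp
  hence gA: "a - 2*b*zz > \<Lambda> * M" using abT by linarith
  have gr: "grad \<psi> x0 = (\<sigma>*(a - 2*b*zz)) *\<^sub>R e" unfolding \<psi>_def grad_P zz_def ..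
  have ngr: "norm (grad \<psi> x0) = a - 2*b*zz" using gA LM0 ne1 ss
    by (simp add: gr abs_mult)
  have "\<bar>u x0\<bar> = w x0" using pos x0O sg w_def by auto
  moreover have "w x0 \<le> M" using xbmax x0c by (simp add: w_def M_def)
  ultimately have "\<Lambda> * \<bar>u x0\<bar> \<le> \<Lambda> * M" using L0 by (simp add: mult_left_mono)
  hence ng: "norm (grad \<psi> x0) > \<Lambda> * \<bar>u x0\<bar>" using ngr gA by simp
  have "e \<bullet> e = 1" using ne1 by (metis norm_eq_sqrt_inner real_sqrt_eq_1_iff)
  hence "e \<bullet> grad \<psi> x0 = \<sigma>*(a - 2*b*zz)" by (simp add: gr)
  hence "\<sigma> * hess_form \<psi> x0 (grad \<psi> x0) = -2*b*(a - 2*b*zz)^2"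
  proof -
    have "\<sigma> * hess_form \<psi> x0 (grad \<psi> x0) = (\<sigma>*\<sigma>) * (-2*b*(\<sigma>*(a - 2*b*zz))^2)"
      unfolding \<psi>_def hess_P using \<open>e \<bullet> grad \<psi> x0 = _\<close> unfolding \<psi>_def by (simp only: mult.assoc)
    also have "\<dots> = -2*b*(a - 2*b*zz)^2" using ss by (simp add: power_mult_distrib power2_eq_square)
    finally show ?thesis .
  qed
  moreover have "(a - 2*b*zz)^2 > 0" using gA LM0 by simp
  ultimately have hs: "\<sigma> * hess_form \<psi> x0 (grad \<psi> x0) < 0" using bpos by (simp add: mult_pos_pos)
  have "Ck_on 2 \<psi> \<Omega>" unfolding \<psi>_def by (rule P_C2)
  then show ?thesis using x0O psi0 touch ng hs by blast
qed


theorem corollary3: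
  fixes \<Omega> :: "'a::euclidean_space set" and u :: "'a \<Rightarrow> real"
  assumes "open \<Omega>" and "bounded \<Omega>" and "convex \<Omega>" and "smooth_boundary \<Omega>"
    and "visc_solution (2 / diameter \<Omega>) \<Omega> u"
  shows "\<not> (\<exists>\<Omega>'. open \<Omega>' \<and> \<Omega>' \<noteq> {} \<and> closure \<Omega>' \<subseteq> \<Omega> \<and>
              (\<forall>x\<in>frontier \<Omega>'. u x = 0) \<and>
              ((\<forall>x\<in>\<Omega>'. u x > 0) \<or> (\<forall>x\<in>\<Omega>'. u x < 0)))"
proof
  assume "\<exists>\<Omega>'. open \<Omega>' \<and> \<Omega>' \<noteq> {} \<and> closure \<Omega>' \<subseteq> \<Omega> \<and>
              (\<forall>x\<in>frontier \<Omega>'. u x = 0) \<and>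
              ((\<forall>x\<in>\<Omega>'. u x > 0) \<or> (\<forall>x\<in>\<Omega>'. u x < 0))"
  then obtain \<Omega>' where oO': "open \<Omega>'" and ne: "\<Omega>' \<noteq> {}" and sub: "closure \<Omega>' \<subseteq> \<Omega>"
    and fr: "\<forall>x\<in>frontier \<Omega>'. u x = 0" and sgn: "(\<forall>x\<in>\<Omega>'. u x > 0) \<or> (\<forall>x\<in>\<Omega>'. u x < 0)"
    by blast
  define D where "D = diameter \<Omega>"
  define \<Lambda> where "\<Lambda> = 2 / diameter \<Omega>"
  have oO: "open \<Omega>" and bO: "bounded \<Omega>" using assms by auto
  have sol: "continuous_on (closure \<Omega>) u" "visc_subsolution \<Lambda> \<Omega> u" "visc_supersolution \<Lambda> \<Omega> u"
    using assms(5) unfolding visc_solution_def \<Lambda>_def by auto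
  define e :: 'a where "e = (SOME i. i \<in> Basis)"
  have eB: "e \<in> Basis" unfolding e_def by (rule SOME_Basis)
  hence ne1: "norm e = 1" by simp
  have cl_sub: "closure \<Omega>' \<subseteq> \<Omega>" by (rule sub)
  have "\<Omega>' \<subseteq> \<Omega>" using sub closure_subset by blast
  hence bO': "bounded \<Omega>'" by (rule bounded_subset[OF bO])
  have cpt: "compact (closure \<Omega>')" using bO' by (simp add: compact_closure)
  have ne': "closure \<Omega>' \<noteq> {}" using ne by (simp add: closure_eq_empty)
  have cin: "continuous_on (closure \<Omega>') (\<lambda>x. e \<bullet> x)" by (intro continuous_intros)
  obtain p where pc: "p \<in> closure \<Omega>'" and pm: "\<forall>x\<in>closure \<Omega>'. e \<bullet> p \<le> e \<bullet> x"
    using continuous_attains_inf[OF cpt ne' cin] by blast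
  obtain q where qc: "q \<in> closure \<Omega>'" and qm: "\<forall>x\<in>closure \<Omega>'. e \<bullet> x \<le> e \<bullet> q"
    using continuous_attains_sup[OF cpt ne' cin] by blast
  have pO: "p \<in> \<Omega>" and qO: "q \<in> \<Omega>" using pc qc sub by auto
  obtain r1 where r1: "r1 > 0" "ball p r1 \<subseteq> \<Omega>" using oO pO open_contains_ball by blast
  obtain r2 where r2: "r2 > 0" "ball q r2 \<subseteq> \<Omega>" using oO qO open_contains_ball by blast
  define \<epsilon> where "\<epsilon> = min r1 r2 / 2"
  have eps: "\<epsilon> > 0" "\<epsilon> < r1" "\<epsilon> < r2" using r1 r2 by (auto simp: \<epsilon>_def)
  have p': "p - \<epsilon> *\<^sub>R e \<in> \<Omega>" using eps r1 ne1 by (auto simp: dist_norm intro!: subsetD[OF r1(2)])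
  have q': "q + \<epsilon> *\<^sub>R e \<in> \<Omega>" using eps r2 ne1 by (auto simp: dist_norm intro!: subsetD[OF r2(2)])
  have ee: "e \<bullet> e = 1" using ne1 by (metis norm_eq_sqrt_inner real_sqrt_eq_1_iff)
  have "e \<bullet> ((q + \<epsilon> *\<^sub>R e) - (p - \<epsilon> *\<^sub>R e)) \<le> norm e * norm ((q + \<epsilon> *\<^sub>R e) - (p - \<epsilon> *\<^sub>R e))"
    by (rule norm_cauchy_schwarz)
  also have "\<dots> = dist (q + \<epsilon> *\<^sub>R e) (p - \<epsilon> *\<^sub>R e)" using ne1 by (simp add: dist_norm)
  also have "\<dots> \<le> D" unfolding D_def using bO q' p' by (rule diameter_bounded_bound)
  finally have "e \<bullet> q - e \<bullet> p + 2*\<epsilon> \<le> D" using ee by (simp add: inner_diff_right inner_add_right algebra_simps)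
  hence qpD: "e \<bullet> q - e \<bullet> p < D" using eps by linarith
  have "dist p (p - \<epsilon> *\<^sub>R e) \<le> D" unfolding D_def using bO pO p' by (rule diameter_bounded_bound)
  hence Dpos: "D > 0" using eps ne1 by (simp add: dist_norm)
  have LD: "\<Lambda> = 2 / D" by (simp add: \<Lambda>_def D_def)
  have L0: "\<Lambda> \<ge> 0" using Dpos LD by simp
  have Lt: "\<Lambda> * t < 1" if "t < D/2" for t
  proof -
    have "\<Lambda> * t = 2 * t / D" using LD by simp
    also have "\<dots> < 1" using that Dpos by (simp add: divide_less_eq)
    finally show ?thesis .
  qed
  define \<sigma> :: real where "\<sigma> = (if (\<forall>x\<in>\<Omega>'. u x > 0) then 1 else -1)"
  have sg: "\<sigma> = 1 \<or> \<sigma> = -1" by (simp add: \<sigma>_def)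
  have pos: "\<forall>x\<in>\<Omega>'. \<sigma> * u x > 0" using sgn by (auto simp: \<sigma>_def)
  have cu': "continuous_on (closure \<Omega>') (\<lambda>x. \<sigma> * u x)"
  proof -
    have "closure \<Omega>' \<subseteq> closure \<Omega>" using sub closure_subset[of \<Omega>] by (rule order_trans)
    then show ?thesis by (intro continuous_intros continuous_on_subset[OF sol(1)])
  qed
  obtain xb where xb: "xb \<in> closure \<Omega>'" and xbmax: "\<forall>x\<in>closure \<Omega>'. \<sigma> * u x \<le> \<sigma> * u xb"
    using continuous_attains_sup[OF cpt ne' cu'] by blast
  have "\<exists>x0 \<psi>. x0 \<in> \<Omega>' \<and> Ck_on 2 \<psi> \<Omega> \<and> \<psi> x0 = u x0 \<and> (\<forall>x\<in>\<Omega>. x \<noteq> x0 \<longrightarrow> \<sigma> * u x < \<sigma> * \<psi> x)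
     \<and> norm (grad \<psi> x0) > \<Lambda> * \<bar>u x0\<bar> \<and> \<sigma> * hess_form \<psi> x0 (grad \<psi> x0) < 0"
  proof (cases "e \<bullet> xb - e \<bullet> p < D/2")
    case True
    show ?thesis
      by (rule construct[OF bO sol(1) oO' ne sub fr pos sg ne1 L0 xb xbmax pm Lt[OF True]])
  next
    case False
    have "(-e) \<bullet> xb - (-(e \<bullet> q)) < D/2" using False qpD by simp
    moreover have "\<forall>x\<in>closure \<Omega>'. -(e\<bullet>q) \<le> (-e) \<bullet> x" using qm by auto
    moreover have "norm (-e) = 1" using ne1 by simp
    ultimately show ?thesis
      using construct[OF bO sol(1) oO' ne sub fr pos sg _ L0 xb xbmax, of "-e" "-(e\<bullet>q)"] Lt by blast
  qed
  then obtain x0 \<psi> where x0: "x0 \<in> \<Omega>'" and C2: "Ck_on 2 \<psi> \<Omega>" and ps0: "\<psi> x0 = u x0"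
    and touch: "\<forall>x\<in>\<Omega>. x \<noteq> x0 \<longrightarrow> \<sigma> * u x < \<sigma> * \<psi> x"
    and ng: "norm (grad \<psi> x0) > \<Lambda> * \<bar>u x0\<bar>" and hs: "\<sigma> * hess_form \<psi> x0 (grad \<psi> x0) < 0"
    by blast
  have x0O: "x0 \<in> \<Omega>" using x0 sub closure_subset by blast
  show False
  proof (cases "\<sigma> = 1")
    case True
    have ux: "u x0 > 0" using pos x0 True by auto
    have t1: "\<forall>x\<in>\<Omega>. x \<noteq> x0 \<longrightarrow> u x < \<psi> x" using touch True by simp
    have "E_op \<Lambda> (\<psi> x0) (grad \<psi> x0) (hess_form \<psi> x0 (grad \<psi> x0)) \<le> 0"
      using sol(2) x0O C2 ps0 t1 unfolding visc_subsolution_def by blast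
    moreover have "E_op \<Lambda> (\<psi> x0) (grad \<psi> x0) (hess_form \<psi> x0 (grad \<psi> x0)) > 0"
      using ux ng hs True ps0 by (simp add: E_op_def)
    ultimately show False by linarith
  next
    case False
    hence sm: "\<sigma> = -1" using sg by simp
    have ux: "u x0 < 0" using pos x0 sm by auto
    have t1: "\<forall>x\<in>\<Omega>. x \<noteq> x0 \<longrightarrow> u x > \<psi> x" using touch sm by simp
    have "E_op \<Lambda> (\<psi> x0) (grad \<psi> x0) (hess_form \<psi> x0 (grad \<psi> x0)) \<ge> 0"
      using sol(3) x0O C2 ps0 t1 unfolding visc_supersolution_def by blast
    moreover have "E_op \<Lambda> (\<psi> x0) (grad \<psi> x0) (hess_form \<psi> x0 (grad \<psi> x0)) < 0"
      using ux ng hs sm ps0 by (simp add: E_op_def)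
    ultimately show False by linarith
  qed
qed

end
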